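(* Let $\sigma : X^* \to M$ be a monoid choice of generators for a right cancellative monoid $M$. Then the loop problem $L_\sigma(M)$ is deletion-closed: whenever $x, y, w \in \hat{X}^*$ satisfy $w \in L_\sigma(M)$ and $xwy \in L_\sigma(M)$, we have $xy \in L_\sigma(M)$.
   Context: Maps are written on the right. $X^*$ is the free monoid on $X$; a choice of generators is a surjective monoid morphism. Let $\overline{X} = \{\overline{x} : x \in X\}$ be new symbols, $\hat{X} = X \cup \overline{X}$. The loop automaton of $M$ w.r.t. $\sigma$ has vertex set $M$, for each $a \in M$, $x \in X$ an edge $a \to a(x\sigma)$ labelled $x$ and an edge $a(x\sigma) \to a$ labelled $\overline{x}$; the loop problem $L_\sigma(M) \subseteq \hat{X}^*$ is the set of labels of paths from the identity to the identity. *)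

theory Defs
  imports Main
begin

text \<open>Free monoid X* = lists over 'x. Hat X = X + overline X: Inl x is x, Inr x is overline x.
Maps written on the right: a(x sigma) is  a * sigma [x].\<close>

definition monoid_hom_list :: "('x list \<Rightarrow> 'm::monoid_mult) \<Rightarrow> bool" where
  "monoid_hom_list \<sigma> \<longleftrightarrow> \<sigma> [] = 1 \<and> (\<forall>u v. \<sigma> (u @ v) = \<sigma> u * \<sigma> v)"

definition choice_of_generators :: "('x list \<Rightarrow> 'm::monoid_mult) \<Rightarrow> bool" where
  "choice_of_generators \<sigma> \<longleftrightarrow> monoid_hom_list \<sigma> \<and> surj \<sigma>"

definition right_cancellative :: "'m::monoid_mult itself \<Rightarrow> bool" where
  "right_cancellative _ \<longleftrightarrow> (\<forall>a b c :: 'm. a * c = b * c \<longrightarrow> a = b)"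

fun loop_edge :: "('x list \<Rightarrow> 'm::monoid_mult) \<Rightarrow> 'm \<Rightarrow> ('x + 'x) \<Rightarrow> 'm \<Rightarrow> bool" where
  "loop_edge \<sigma> a (Inl x) b \<longleftrightarrow> b = a * \<sigma> [x]"
| "loop_edge \<sigma> a (Inr x) b \<longleftrightarrow> a = b * \<sigma> [x]"

inductive loop_path :: "('x list \<Rightarrow> 'm::monoid_mult) \<Rightarrow> 'm \<Rightarrow> ('x + 'x) list \<Rightarrow> 'm \<Rightarrow> bool"
  for \<sigma> where
  Nil: "loop_path \<sigma> a [] a"
| Cons: "loop_edge \<sigma> a l b \<Longrightarrow> loop_path \<sigma> b w c \<Longrightarrow> loop_path \<sigma> a (l # w) c"

definition loop_problem :: "('x list \<Rightarrow> 'm::monoid_mult) \<Rightarrow> ('x + 'x) list set" where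
  "loop_problem \<sigma> = {w. loop_path \<sigma> 1 w 1}"

end

theory Submission
  imports Defs
begin

lemma lp_append: "loop_path \<sigma> a (u @ v) c \<longleftrightarrow> (\<exists>b. loop_path \<sigma> a u b \<and> loop_path \<sigma> b v c)"
proof (induction u arbitrary: a)
  case Nil
  then show ?case by (auto intro: loop_path.Nil elim: loop_path.cases)
next
  case (Cons l u)
  show ?case
  proof
    assume "loop_path \<sigma> a ((l # u) @ v) c"
    then obtain b where "loop_edge \<sigma> a l b" "loop_path \<sigma> b (u @ v) c"
      by (auto elim: loop_path.cases)
    then show "\<exists>b. loop_path \<sigma> a (l # u) b \<and> loop_path \<sigma> b v c"
      using Cons.IH by (auto intro: loop_path.Cons)
  next
    assume "\<exists>b. loop_path \<sigma> a (l # u) b \<and> loop_path \<sigma> b v c"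
    then obtain b d where "loop_edge \<sigma> a l d" "loop_path \<sigma> d u b" "loop_path \<sigma> b v c"
      by (auto elim: loop_path.cases)
    then show "loop_path \<sigma> a ((l # u) @ v) c"
      using Cons.IH by (auto intro: loop_path.Cons)
  qed
qed

lemma lp_mult: "loop_path \<sigma> c w d \<Longrightarrow> loop_path \<sigma> (e * c) w (e * d)"
proof (induction rule: loop_path.induct)
  case (Nil a)
  then show ?case by (rule loop_path.Nil)
next
  case (Cons a l b w c)
  have "loop_edge \<sigma> (e * a) l (e * b)"
    using Cons.hyps(1) by (cases l) (auto simp: mult.assoc)
  then show ?case using Cons.IH by (rule loop_path.Cons)
qed

lemma lp_det:
  assumes rc: "right_cancellative TYPE('m::monoid_mult)"
  shows "loop_path (\<sigma>::'x list \<Rightarrow> 'm) a w b \<Longrightarrow> loop_path \<sigma> a w b' \<Longrightarrow> b = b'"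
proof (induction arbitrary: b' rule: loop_path.induct)
  case (Nil a)
  then show ?case by (auto elim: loop_path.cases)
next
  case (Cons a l b w c)
  from Cons.prems obtain d where d: "loop_edge \<sigma> a l d" "loop_path \<sigma> d w b'"
    by (auto elim: loop_path.cases)
  have "b = d"
    using Cons.hyps(1) d(1) rc unfolding right_cancellative_def
    by (cases l) auto
  then show ?case using Cons.IH d(2) by simp
qed

theorem proposition7p4:
  fixes \<sigma> :: "'x list \<Rightarrow> 'm::monoid_mult"
  assumes "choice_of_generators \<sigma>"
    and "right_cancellative TYPE('m)"
    and "w \<in> loop_problem \<sigma>"
    and "x @ w @ y \<in> loop_problem \<sigma>"
  shows "x @ y \<in> loop_problem \<sigma>"
proof -
  from assms(4) obtain a b where p: "loop_path \<sigma> 1 x a" "loop_path \<sigma> a w b" "loop_path \<sigma> b y 1"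
    unfolding loop_problem_def by (auto simp: lp_append)
  from assms(3) have "loop_path \<sigma> 1 w 1" unfolding loop_problem_def by simp
  from lp_mult[OF this, of a] have "loop_path \<sigma> a w a" by simp
  with p(2) have "b = a" using lp_det[OF assms(2)] by blast
  with p show ?thesis unfolding loop_problem_def by (auto simp: lp_append)
qed

end
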